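(* Let $A,C$ be integers with $AC\neq0$ and let $f(X)=AX+\frac{C}{X}$. Suppose there exists a nonzero rational number $T$ such that the elliptic curve \[E_2:\ Y^2=(X-2ACT^2)(X+2ACT^2)\bigl(X-2AC(2A^2T^4+(4AC-1)T^2+2C^2)\bigr)\] has positive rank over $\mathbb{Q}$. Then the equation $f(x)f(y)=f(z)$ has infinitely many nontrivial rational solutions $(x,y,z)$.
   Context: A solution $(x,y,z)$ (with $x,y,z$ nonzero, so that $f$ is defined) of $f(x)f(y)=f(z)$ is called nontrivial if $x\neq z$, $y\neq z$ and $f(z)\neq 0$. *)

theory Defs
  imports Main "HOL.Rat"
begin

text \<open>Rational points of the Weierstrass curve  y^2 = x^3 + a x^2 + b x + c  over Q.
  None is the point at infinity O; Some (x,y) an affine point.\<close>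

type_synonym ec_point = "(rat \<times> rat) option"

definition on_curve :: "rat \<Rightarrow> rat \<Rightarrow> rat \<Rightarrow> ec_point \<Rightarrow> bool" where
  "on_curve a b c P = (case P of None \<Rightarrow> True
     | Some (x, y) \<Rightarrow> y^2 = x^3 + a * x^2 + b * x + c)"

definition ec_add :: "rat \<Rightarrow> rat \<Rightarrow> rat \<Rightarrow> ec_point \<Rightarrow> ec_point \<Rightarrow> ec_point" where
  "ec_add a b c P Q = (case P of None \<Rightarrow> Q | Some (x1, y1) \<Rightarrow>
     (case Q of None \<Rightarrow> P | Some (x2, y2) \<Rightarrow>
       (if x1 = x2 \<and> y1 = - y2 then None
        else (let l = (if x1 = x2 then (3 * x1^2 + 2 * a * x1 + b) / (2 * y1)
                       else (y2 - y1) / (x2 - x1));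
                  x3 = l^2 - a - x1 - x2
              in Some (x3, - (y1 + l * (x3 - x1)))))))"

fun ec_smul :: "rat \<Rightarrow> rat \<Rightarrow> rat \<Rightarrow> nat \<Rightarrow> ec_point \<Rightarrow> ec_point" where
  "ec_smul a b c 0 P = None"
| "ec_smul a b c (Suc n) P = ec_add a b c P (ec_smul a b c n P)"

text \<open>The Mordell-Weil group E(Q) has positive rank iff it contains a point of infinite order.\<close>
definition positive_rank :: "rat \<Rightarrow> rat \<Rightarrow> rat \<Rightarrow> bool" where
  "positive_rank a b c = (\<exists>P. on_curve a b c P \<and> (\<forall>n>0. ec_smul a b c n P \<noteq> None))"

definition roots_curve_positive_rank :: "rat \<Rightarrow> rat \<Rightarrow> rat \<Rightarrow> bool" where
  "roots_curve_positive_rank e1 e2 e3 =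
     positive_rank (- (e1 + e2 + e3)) (e1 * e2 + e1 * e3 + e2 * e3) (- (e1 * e2 * e3))"

end

theory Submission imports Defs "HOL-Computational_Algebra.Polynomial" begin

definition gc :: "rat \<Rightarrow> rat \<Rightarrow> rat \<Rightarrow> rat \<Rightarrow> rat" where
  "gc a b c x = x^3 + a*x^2 + b*x + c"

definition slope :: "rat \<Rightarrow> rat \<Rightarrow> rat \<Rightarrow> rat \<Rightarrow> rat \<Rightarrow> rat \<Rightarrow> rat" where
  "slope a b x1 y1 x2 y2 = (if x1 = x2 then (3 * x1^2 + 2 * a * x1 + b) / (2 * y1)
                       else (y2 - y1) / (x2 - x1))"

definition al :: "rat \<Rightarrow> rat \<Rightarrow> rat \<Rightarrow> rat \<Rightarrow> rat \<Rightarrow> rat \<Rightarrow> rat" where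
  "al a b x1 y1 x2 l = b - 2*l*y1 + 2*l^2*x1 - (x1*x2 + x1*(l^2-a-x1-x2) + x2*(l^2-a-x1-x2))"
definition be :: "rat \<Rightarrow> rat \<Rightarrow> rat \<Rightarrow> rat \<Rightarrow> rat \<Rightarrow> rat \<Rightarrow> rat" where
  "be a c x1 y1 x2 l = c - (y1 - l*x1)^2 + x1*x2*(l^2-a-x1-x2)"

lemma ident: "gc a b c x - (y1 + l*(x-x1))^2 - (x-x1)*(x-x2)*(x-(l^2-a-x1-x2))
   = al a b x1 y1 x2 l * x + be a c x1 y1 x2 l"
  unfolding gc_def al_def be_def by (simp add: power2_eq_square power3_eq_cube algebra_simps)

lemma on_curve_some: "on_curve a b c (Some (x,y)) \<longleftrightarrow> y^2 = gc a b c x"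
  by (simp add: on_curve_def gc_def)

lemma ec_add_some: "ec_add a b c (Some (x1,y1)) (Some (x2,y2)) =
  (if x1 = x2 \<and> y1 = -y2 then None else
   Some (slope a b x1 y1 x2 y2 ^2 - a - x1 - x2,
         -(y1 + slope a b x1 y1 x2 y2 * (slope a b x1 y1 x2 y2 ^2 - a - x1 - x2 - x1))))"
  by (simp add: ec_add_def slope_def Let_def)

lemma on_curve_None[simp]: "on_curve a b c None" by (simp add: on_curve_def)

lemma ec_add_None1[simp]: "ec_add a b c None Q = Q" by (simp add: ec_add_def)
lemma ec_add_None2[simp]: "ec_add a b c P None = P"
  by (cases P) (auto simp: ec_add_def)

lemma config:
  assumes h1: "y1^2 = gc a b c x1" and h2: "y2^2 = gc a b c x2"
    and nn: "\<not>(x1 = x2 \<and> y1 = -y2)" and l: "l = slope a b x1 y1 x2 y2"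
  shows "al a b x1 y1 x2 l = 0 \<and> be a c x1 y1 x2 l = 0 \<and> y2 = y1 + l*(x2-x1)"
proof (cases "x1 = x2")
  case True
  have "(y2-y1)*(y2+y1) = 0" using h1 h2 True by (simp add: power2_eq_square algebra_simps)
  moreover have "y2 + y1 \<noteq> 0" using nn True by (auto simp: algebra_simps)
  ultimately have y: "y2 = y1" by simp
  have y10: "y1 \<noteq> 0" using nn True y by auto
  have ll: "2*l*y1 = 3 * x1^2 + 2 * a * x1 + b" using l True y10 by (simp add: slope_def)
  have a0: "al a b x1 y1 x2 l = 0" unfolding al_def using True ll
    by (simp add: power2_eq_square algebra_simps)
  have "gc a b c x1 - (y1 + l*(x1-x1))^2 - (x1-x1)*(x1-x2)*(x1-(l^2-a-x1-x2))
     = al a b x1 y1 x2 l * x1 + be a c x1 y1 x2 l" by (rule ident)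
  with h1 a0 have "be a c x1 y1 x2 l = 0" by simp
  with a0 y True show ?thesis by simp
next
  case False
  have ly: "y2 = y1 + l*(x2-x1)" using l False by (simp add: slope_def)
  have e1: "al a b x1 y1 x2 l * x1 + be a c x1 y1 x2 l = 0"
    using ident[of a b c x1 y1 l x1 x2] h1 by simp
  have e2: "al a b x1 y1 x2 l * x2 + be a c x1 y1 x2 l = 0"
    using ident[of a b c x2 y1 l x1 x2] h2 ly by simp
  have "al a b x1 y1 x2 l * (x2 - x1) = (al a b x1 y1 x2 l * x2 + be a c x1 y1 x2 l)
     - (al a b x1 y1 x2 l * x1 + be a c x1 y1 x2 l)" by (simp add: algebra_simps)
  hence "al a b x1 y1 x2 l * (x2 - x1) = 0" using e1 e2 by simp
  hence a0: "al a b x1 y1 x2 l = 0" using False by simp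
  with e1 show ?thesis using ly by simp
qed

lemma closure:
  assumes "on_curve a b c P" "on_curve a b c Q"
  shows "on_curve a b c (ec_add a b c P Q)"
proof (cases P)
  case None thus ?thesis using assms by simp
next
  case (Some p)
  obtain x1 y1 where p: "P = Some (x1,y1)" using Some by (cases p) auto
  show ?thesis
  proof (cases Q)
    case None thus ?thesis using assms by simp
  next
    case (Some q)
    obtain x2 y2 where q: "Q = Some (x2,y2)" using Some by (cases q) auto
    show ?thesis
    proof (cases "x1 = x2 \<and> y1 = -y2")
      case True thus ?thesis using p q by (simp add: ec_add_some on_curve_def)
    next
      case False
      define l where "l = slope a b x1 y1 x2 y2"
      have h1: "y1^2 = gc a b c x1" and h2: "y2^2 = gc a b c x2"
        using assms p q by (auto simp: on_curve_some)
      from config[OF h1 h2 False l_def] have c: "al a b x1 y1 x2 l = 0" "be a c x1 y1 x2 l = 0" by auto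
      define x3 where "x3 = l^2 - a - x1 - x2"
      have "gc a b c x3 - (y1 + l*(x3-x1))^2 - (x3-x1)*(x3-x2)*(x3-(l^2-a-x1-x2))
         = al a b x1 y1 x2 l * x3 + be a c x1 y1 x2 l" by (rule ident)
      hence "(y1 + l*(x3-x1))^2 = gc a b c x3" using c by (simp add: x3_def)
      hence "(-(y1 + l*(x3-x1)))^2 = gc a b c x3" by (simp only: power2_minus)
      thus ?thesis using p q False
        by (simp add: ec_add_some on_curve_some l_def[symmetric] x3_def[symmetric])
    qed
  qed
qed

lemma result_info:
  assumes h1: "y1^2 = gc a b c x1" and h2: "y2^2 = gc a b c x2"
    and r: "ec_add a b c (Some (x1,y1)) (Some (x2,y2)) = Some (x3,y3)"
  defines "l \<equiv> slope a b x1 y1 x2 y2"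
  shows "x2 = l^2 - a - x1 - x3 \<and> y2 = y1 + l*(x2-x1) \<and> y3 = -(y1 + l*(x3-x1))
     \<and> (x3 = x1 \<longrightarrow> 2*l*y1 = 3*x1^2 + 2*a*x1 + b)"
proof -
  have nn: "\<not>(x1 = x2 \<and> y1 = -y2)" using r by (auto simp: ec_add_some split: if_splits)
  have x3: "x3 = l^2 - a - x1 - x2" and y3: "y3 = -(y1 + l*(x3-x1))"
    using r nn by (auto simp: ec_add_some l_def)
  from config[OF h1 h2 nn l_def[THEN meta_eq_to_obj_eq]] have c: "al a b x1 y1 x2 l = 0" "y2 = y1 + l*(x2-x1)" by auto
  have "x3 = x1 \<longrightarrow> 2*l*y1 = 3*x1^2 + 2*a*x1 + b"
  proof
    assume e: "x3 = x1"
    have x2: "x2 = l^2 - a - 2*x1" using x3 e by simp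
    show "2*l*y1 = 3*x1^2 + 2*a*x1 + b"
      using c(1) unfolding al_def x2 by (simp add: power2_eq_square algebra_simps)
  qed
  thus ?thesis using x3 y3 c by simp
qed

lemma transl_inj:
  assumes ns: "\<forall>x. gc a b c x = 0 \<longrightarrow> 3*x^2+2*a*x+b \<noteq> 0"
    and P: "on_curve a b c P" and Q: "on_curve a b c Q" and R: "on_curve a b c R"
    and eq: "ec_add a b c P Q = ec_add a b c P R"
  shows "Q = R"
proof (cases P)
  case None thus ?thesis using eq by simp
next
  case (Some p)
  obtain x1 y1 where p: "P = Some (x1,y1)" using Some by (cases p) auto
  have h1: "y1^2 = gc a b c x1" using P p by (simp add: on_curve_some)
  have noself: False if "ec_add a b c P (Some (x2,y2)) = P" "y2^2 = gc a b c x2" for x2 y2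
  proof -
    from result_info[OF h1 that(2)] that(1) p
    obtain l where "y1 = -(y1 + l*(x1-x1))" "2*l*y1 = 3*x1^2 + 2*a*x1 + b" by auto
    hence "y1 = 0" "3*x1^2 + 2*a*x1 + b = 0" by auto
    moreover have "gc a b c x1 = 0" using h1 \<open>y1 = 0\<close> by simp
    ultimately show False using ns by auto
  qed
  show ?thesis
  proof (cases Q)
    case None
    show ?thesis
    proof (cases R)
      case None thus ?thesis using \<open>Q = None\<close> by simp
    next
      case (Some r) then obtain x2 y2 where "R = Some (x2,y2)" by (cases r) auto
      thus ?thesis using noself[of x2 y2] eq \<open>Q = None\<close> R by (auto simp: on_curve_some)
    qed
  next
    case (Some q)
    obtain x2 y2 where q: "Q = Some (x2,y2)" using Some by (cases q) auto
    have h2: "y2^2 = gc a b c x2" using Q q by (simp add: on_curve_some)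
    show ?thesis
    proof (cases R)
      case None thus ?thesis using noself[of x2 y2] eq q h2 by auto
    next
      case (Some r) then obtain x2' y2' where r: "R = Some (x2',y2')" by (cases r) auto
      have h2': "y2'^2 = gc a b c x2'" using R r by (simp add: on_curve_some)
      show ?thesis
      proof (cases "ec_add a b c P Q")
        case None
        hence "x1 = x2 \<and> y1 = -y2" using p q by (auto simp: ec_add_some split: if_splits)
        moreover have "x1 = x2' \<and> y1 = -y2'" using None eq p r by (auto simp: ec_add_some split: if_splits)
        ultimately show ?thesis using q r by simp
      next
        case (Some s)
        obtain x3 y3 where s: "ec_add a b c P Q = Some (x3,y3)" using Some by (cases s) auto
        have s': "ec_add a b c P R = Some (x3,y3)" using s eq by simp
        define l where "l = slope a b x1 y1 x2 y2"
        define l' where "l' = slope a b x1 y1 x2' y2'"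
        have i1: "x2 = l^2 - a - x1 - x3 \<and> y2 = y1 + l*(x2-x1) \<and> y3 = -(y1 + l*(x3-x1))
          \<and> (x3 = x1 \<longrightarrow> 2*l*y1 = 3*x1^2 + 2*a*x1 + b)"
          using result_info[OF h1 h2] s p q unfolding l_def by simp
        have i2: "x2' = l'^2 - a - x1 - x3 \<and> y2' = y1 + l'*(x2'-x1) \<and> y3 = -(y1 + l'*(x3-x1))
          \<and> (x3 = x1 \<longrightarrow> 2*l'*y1 = 3*x1^2 + 2*a*x1 + b)"
          using result_info[OF h1 h2'] s' p r unfolding l'_def by simp
        have "l = l'"
        proof (cases "x3 = x1")
          case True
          have "y1 \<noteq> 0"
          proof
            assume "y1 = 0"
            hence "gc a b c x1 = 0" "3*x1^2 + 2*a*x1 + b = 0" using h1 i1 True by auto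
            thus False using ns by auto
          qed
          moreover have "2*l*y1 = 2*l'*y1" using i1 i2 True by simp
          ultimately show ?thesis by simp
        next
          case False
          have "l*(x3-x1) = l'*(x3-x1)" using i1 i2 by (simp add: algebra_simps)
          thus ?thesis using False by simp
        qed
        thus ?thesis using i1 i2 q r by simp
      qed
    qed
  qed
qed

lemma smul_on_curve: "on_curve a b c P \<Longrightarrow> on_curve a b c (ec_smul a b c n P)"
proof (induction n)
  case 0 thus ?case by (simp add: on_curve_def)
next
  case (Suc n) thus ?case by (simp add: closure)
qed

lemma infinite_points:
  assumes ns: "\<forall>x. gc a b c x = 0 \<longrightarrow> 3*x^2+2*a*x+b \<noteq> 0"
    and pr: "positive_rank a b c"
  shows "infinite {(x,y). y^2 = gc a b c x}"
proof
  assume fin: "finite {(x,y). y^2 = gc a b c x}"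
  obtain P where P: "on_curve a b c P" and nz: "\<forall>n>0. ec_smul a b c n P \<noteq> None"
    using pr unfolding positive_rank_def by blast
  have inj: "ec_smul a b c m P = ec_smul a b c n P \<Longrightarrow> m = n" for m n
  proof (induction m arbitrary: n)
    case 0 thus ?case using nz by (metis ec_smul.simps(1) neq0_conv)
  next
    case (Suc m)
    show ?case
    proof (cases n)
      case 0 thus ?thesis using Suc.prems nz by (metis ec_smul.simps(1) zero_less_Suc)
    next
      case (Suc n')
      have "ec_smul a b c m P = ec_smul a b c n' P"
        using transl_inj[OF ns P smul_on_curve[OF P] smul_on_curve[OF P]] Suc.prems Suc by simp
      thus ?thesis using Suc.IH Suc by simp
    qed
  qed
  hence "inj (\<lambda>n. ec_smul a b c n P)" by (auto intro: injI)
  hence "infinite (range (\<lambda>n. ec_smul a b c n P))" using finite_imageD infinite_UNIV_nat by blast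
  moreover have "range (\<lambda>n. ec_smul a b c n P) \<subseteq> insert None (Some ` {(x,y). y^2 = gc a b c x})"
  proof
    fix Q assume "Q \<in> range (\<lambda>n. ec_smul a b c n P)"
    then obtain n where "Q = ec_smul a b c n P" by auto
    hence "on_curve a b c Q" using smul_on_curve[OF P] by simp
    thus "Q \<in> insert None (Some ` {(x,y). y^2 = gc a b c x})"
      by (cases Q) (auto simp: on_curve_some)
  qed
  ultimately show False using fin finite_subset by blast
qed


lemma L2:
  fixes Ar Cr T X Y F D e s r :: rat
  assumes A0: "Ar \<noteq> 0" and C0: "Cr \<noteq> 0" and T0: "T \<noteq> 0" and F0: "F \<noteq> 0"
   and D: "D = 4*Ar*Cr" and e: "e = 2*Ar*Cr*T^2"
   and Yc: "Y^2 = (X - e)*(X + e)*(X - e*(2*F^2-1))" and Y0: "Y \<noteq> 0" and Xe: "X \<noteq> e"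
   and s: "s = (4*Y/(F*T^3)) / (2*D*(X/e - 1))" and r: "r = F*s^2 + D*(F^2-1-X/e)/F"
  shows "s \<noteq> 0 \<and> r^2 = F^2*s^4 + (2*D*F^2 - 4*D)*s^2 + F^2*D^2"
proof -
  have e0: "e \<noteq> 0" using e A0 C0 T0 by simp
  have D0: "D \<noteq> 0" using D A0 C0 by simp
  define \<xi> where "\<xi> = X/e"
  have X: "X = e*\<xi>" using e0 \<xi>_def by simp
  have \<xi>1: "\<xi> \<noteq> 1" using Xe X by auto
  define t where "t = D*(F^2-1-\<xi>)/F"
  define w where "w = 4*Y/(F*T^3)"
  define k where "k = 2*D*(\<xi>-1)"
  have k0: "k \<noteq> 0" using \<xi>1 D0 k_def by simp
  define P where "P = (\<xi>-1)*(\<xi>+1)*(\<xi>-(2*F^2-1))"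
  have Y2: "Y^2 = e^3*P" unfolding Yc X P_def by (simp add: power3_eq_cube algebra_simps)
  have e3: "e^3 = D^3*T^6/8" unfolding e D by (simp add: power_mult_distrib field_simps)
  have w2: "w^2 = 2*D^3/F^2 * P"
    unfolding w_def using Y2 e3 F0 T0 by (simp add: power_divide power_mult_distrib field_simps)
  have tt: "t^2 - F^2*D^2 = D^2/F^2 * ((\<xi>+1)*(\<xi>-(2*F^2-1)))"
    unfolding t_def using F0 by (simp add: power_divide field_simps power2_eq_square)
  have key: "w^2 = (t^2 - F^2*D^2) * k"
    unfolding w2 tt k_def P_def using F0 by (simp add: field_simps power3_eq_cube power2_eq_square)
  have ss: "s = w / k" using s w_def k_def \<xi>_def by simp
  have sk: "s^2 * k = t^2 - F^2*D^2" unfolding ss using k0 key by (simp add: power2_eq_square field_simps)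
  have w0: "w \<noteq> 0" using Y0 F0 T0 w_def by simp
  have s0: "s \<noteq> 0" using ss w0 k0 by simp
  have rt: "r = F*s^2 + t" using r t_def \<xi>_def by simp
  have kt: "2*F*t + k = 2*D*F^2 - 4*D" unfolding t_def k_def using F0 by (simp add: field_simps)
  have "r^2 = F^2*s^4 + (2*F*t)*s^2 + t^2" unfolding rt by (simp add: power2_eq_square power4_eq_xxxx algebra_simps)
  also have "... = F^2*s^4 + (2*F*t + k)*s^2 + F^2*D^2" using sk by (simp add: algebra_simps)
  finally show ?thesis using s0 kt by simp
qed

lemma L1:
  fixes Ar Cr F D s r x z :: rat
  assumes A0: "Ar \<noteq> 0" and C0: "Cr \<noteq> 0" and s0: "s \<noteq> 0" and D: "D = 4*Ar*Cr"
   and rr: "r^2 = F^2*s^4 + (2*D*F^2 - 4*D)*s^2 + F^2*D^2"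
   and x: "x = 2*Cr/s" and z: "z = (F*(s^2+D) + r)/(4*Ar*s)"
  shows "x \<noteq> 0 \<and> z \<noteq> 0 \<and> Ar*x + Cr/x = (s^2+D)/(2*s) \<and> Ar*z + Cr/z = F*((s^2+D)/(2*s))"
proof -
  define u where "u = (s^2+D)/(2*s)"
  define q where "q = r/(2*s)"
  have q2: "q^2 = F^2*u^2 - D" unfolding q_def u_def using rr s0
    by (simp add: power_divide field_simps power2_eq_square power4_eq_xxxx)
  have zq: "2*Ar*z - F*u = q" unfolding z u_def q_def using A0 s0 by (simp add: field_simps)
  have quad: "Ar*z^2 - F*u*z + Cr = 0"
  proof -
    have "(2*Ar*z - F*u)^2 = F^2*u^2 - 4*Ar*Cr" using zq q2 D by simp
    hence "4*Ar*(Ar*z^2 - F*u*z + Cr) = 0" by (simp add: power2_eq_square algebra_simps)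
    thus ?thesis using A0 by simp
  qed
  have z0: "z \<noteq> 0" using quad C0 by auto
  have fz: "Ar*z + Cr/z = F*u"
  proof -
    have "Ar*z + Cr/z = (Ar*z^2 + Cr)/z" using z0 by (simp add: field_simps power2_eq_square)
    also have "... = F*u*z/z" using quad by (simp add: algebra_simps)
    finally show ?thesis using z0 by simp
  qed
  have x0: "x \<noteq> 0" using x C0 s0 by simp
  have fx: "Ar*x + Cr/x = u" unfolding x u_def D using s0 C0 by (simp add: field_simps power2_eq_square)
  show ?thesis using x0 z0 fx fz u_def by simp
qed


lemma quad_roots_finite:
  fixes Ar Cr k :: rat
  assumes "Ar \<noteq> 0"
  shows "finite {x. x \<noteq> 0 \<and> Ar*x + Cr/x = k}"
proof -
  have "{x. x \<noteq> 0 \<and> Ar*x + Cr/x = k} \<subseteq> {x. poly [:Cr, -k, Ar:] x = 0}"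
  proof
    fix x assume "x \<in> {x. x \<noteq> 0 \<and> Ar*x + Cr/x = k}"
    hence x0: "x \<noteq> 0" and h: "Ar*x + Cr/x = k" by auto
    have "Ar*x*x + Cr = k*x" using h x0 by (simp add: field_simps)
    thus "x \<in> {x. poly [:Cr, -k, Ar:] x = 0}" by (simp add: algebra_simps)
  qed
  moreover have "[:Cr, -k, Ar:] \<noteq> 0" using assms by simp
  ultimately show ?thesis using poly_roots_finite finite_subset by blast
qed

theorem theorem1p2:
  fixes A C :: int and T :: rat
  defines "f \<equiv> (\<lambda>x::rat. of_int A * x + of_int C / x)"
  defines "e1 \<equiv> 2 * of_int A * of_int C * T^2"
  defines "e2 \<equiv> - 2 * of_int A * of_int C * T^2"
  defines "e3 \<equiv> 2 * of_int A * of_int C *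
             (2 * (of_int A)^2 * T^4 + (4 * of_int A * of_int C - 1) * T^2 + 2 * (of_int C)^2)"
  assumes "A * C \<noteq> 0"
    and "T \<noteq> 0"
    and "e1 \<noteq> e2" and "e1 \<noteq> e3" and "e2 \<noteq> e3"
    and "roots_curve_positive_rank e1 e2 e3"
  shows "infinite {(x::rat, y::rat, z::rat).
           x \<noteq> 0 \<and> y \<noteq> 0 \<and> z \<noteq> 0 \<and> f x * f y = f z \<and>
           x \<noteq> z \<and> y \<noteq> z \<and> f z \<noteq> 0}"
proof -
  define Ar :: rat where "Ar = of_int A"
  define Cr :: rat where "Cr = of_int C"
  have A0: "Ar \<noteq> 0" and C0: "Cr \<noteq> 0" using assms(5) Ar_def Cr_def by auto
  note T0 = assms(6)
  define F where "F = Ar*T + Cr/T"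
  define D where "D = 4*Ar*Cr"
  define e where "e = 2*Ar*Cr*T^2"
  have fdef: "\<And>x. f x = Ar*x + Cr/x" unfolding f_def Ar_def Cr_def by simp
  have E1: "e1 = e" unfolding e1_def e_def Ar_def Cr_def by simp
  have E2: "e2 = -e" unfolding e2_def e_def Ar_def Cr_def by simp
  have E3: "e3 = e*(2*F^2-1)" unfolding e3_def e_def F_def Ar_def Cr_def using T0
    by (simp add: field_simps power2_eq_square power4_eq_xxxx)
  have e0: "e \<noteq> 0" using E1 E2 assms(7) by auto
  have F0: "F \<noteq> 0"
  proof
    assume "F = 0" hence "e3 = e2" using E2 E3 by simp
    thus False using assms(9) by simp
  qed
  have fT: "f T = F" using fdef F_def by simp
  define a where "a = - (e1 + e2 + e3)"
  define b where "b = e1 * e2 + e1 * e3 + e2 * e3"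
  define c where "c = - (e1 * e2 * e3)"
  have gfac: "gc a b c x = (x-e1)*(x-e2)*(x-e3)" for x
    unfolding gc_def a_def b_def c_def by (simp add: power2_eq_square power3_eq_cube algebra_simps)
  have gder: "3*x^2+2*a*x+b = (x-e1)*(x-e2) + (x-e1)*(x-e3) + (x-e2)*(x-e3)" for x
    unfolding a_def b_def by (simp add: power2_eq_square algebra_simps)
  have ns: "\<forall>x. gc a b c x = 0 \<longrightarrow> 3*x^2+2*a*x+b \<noteq> 0"
  proof (intro allI impI)
    fix x assume "gc a b c x = 0"
    hence "x = e1 \<or> x = e2 \<or> x = e3" unfolding gfac by auto
    thus "3*x^2+2*a*x+b \<noteq> 0" unfolding gder using assms(7,8,9) by auto
  qed
  have pr: "positive_rank a b c" using assms(10)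
    unfolding roots_curve_positive_rank_def a_def b_def c_def by simp
  define Pts where "Pts = {(x,y). y^2 = gc a b c x}"
  have infP: "infinite Pts" using infinite_points[OF ns pr] Pts_def by simp
  define G where "G = Pts - {(e1,0),(e2,0),(e3,0)}"
  have infG: "infinite G" using infP G_def by simp
  have Gprop: "Y^2 = (X - e)*(X + e)*(X - e*(2*F^2-1)) \<and> Y \<noteq> 0 \<and> X \<noteq> e" if "(X,Y) \<in> G" for X Y
  proof -
    have c: "Y^2 = (X - e)*(X + e)*(X - e*(2*F^2-1))" using that unfolding G_def Pts_def gfac E1 E2 E3
      by (simp add: algebra_simps)
    have "Y \<noteq> 0"
    proof
      assume "Y = 0"
      moreover have "Y^2 = (X-e1)*(X-e2)*(X-e3)" using that unfolding G_def Pts_def gfac by simp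
      ultimately have "(X-e1)*(X-e2)*(X-e3) = 0" by simp
      hence "X = e1 \<or> X = e2 \<or> X = e3" by auto
      thus False using that \<open>Y = 0\<close> G_def by auto
    qed
    moreover have "X \<noteq> e" using c \<open>Y \<noteq> 0\<close> by auto
    ultimately show ?thesis using c by simp
  qed
  define sf where "sf = (\<lambda>X Y. (4*Y/(F*T^3)) / (2*D*(X/e - 1)))"
  define rf where "rf = (\<lambda>X Y. F*(sf X Y)^2 + D*(F^2-1-X/e)/F)"
  define \<Phi> where "\<Phi> = (\<lambda>(X,Y). (2*Cr/sf X Y, T, (F*((sf X Y)^2+D) + rf X Y)/(4*Ar*sf X Y)))"
  define \<psi> where "\<psi> = (\<lambda>(x::rat,y::rat,z::rat).
     let s = 2*Cr/x; r = 4*Ar*s*z - F*(s^2+D); t = r - F*s^2; \<xi> = F^2-1 - t*F/D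
     in (e*\<xi>, (s*(2*D*(\<xi>-1)))*F*T^3/4))"
  have D0: "D \<noteq> 0" using D_def A0 C0 by simp
  have props: "sf X Y \<noteq> 0 \<and> (rf X Y)^2 = F^2*(sf X Y)^4 + (2*D*F^2 - 4*D)*(sf X Y)^2 + F^2*D^2"
    if "(X,Y) \<in> G" for X Y
    using L2[OF A0 C0 T0 F0 D_def e_def, of Y X "sf X Y" "rf X Y"] Gprop[OF that]
    unfolding sf_def rf_def by simp
  have inv: "\<psi> (\<Phi> p) = p" if "p \<in> G" for p
  proof -
    obtain X Y where p: "p = (X,Y)" by (cases p)
    have XY: "(X,Y) \<in> G" using that p by simp
    define s where "s = sf X Y"
    define r where "r = rf X Y"
    have s0: "s \<noteq> 0" using props[OF XY] s_def by simp
    have Xe: "X \<noteq> e" using Gprop[OF XY] by simp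
    have 1: "2*Cr/(2*Cr/s) = s" using C0 s0 by simp
    have 2: "4*Ar*s*((F*(s^2+D) + r)/(4*Ar*s)) - F*(s^2+D) = r" using A0 s0 by (simp add: field_simps)
    have 3: "F^2-1 - (r - F*s^2)*F/D = X/e" unfolding r_def rf_def s_def[symmetric]
      using F0 D0 by (simp add: field_simps)
    have 4: "e*(X/e) = X" using e0 by simp
    have 5: "(s*(2*D*(X/e-1)))*F*T^3/4 = Y"
    proof -
      have "X/e - 1 \<noteq> 0" using Xe e0 by (simp add: field_simps)
      hence k0: "2*D*(X/e-1) \<noteq> 0" using D0 by simp
      define k where "k = 2*D*(X/e-1)"
      define w where "w = 4*Y/(F*T^3)"
      have "w / k * k = w" using k0 k_def by simp
      hence "s*(2*D*(X/e-1)) = 4*Y/(F*T^3)" unfolding s_def sf_def k_def[symmetric] w_def[symmetric] by simp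
      thus ?thesis using F0 T0 by (simp add: field_simps)
    qed
    have P: "\<Phi> (X,Y) = (2*Cr/s, T, (F*(s^2+D)+r)/(4*Ar*s))" by (simp add: \<Phi>_def s_def r_def)
    show ?thesis unfolding p P \<psi>_def Let_def prod.case
      by (simp only: 1 2 3 4 5)
  qed
  have injP: "inj_on \<Phi> G" using inj_on_inverseI[of G \<psi> \<Phi>] inv by blast
  have infI: "infinite (\<Phi> ` G)" using injP infG finite_imageD by blast
  define S where "S = {(x::rat, y::rat, z::rat).
           x \<noteq> 0 \<and> y \<noteq> 0 \<and> z \<noteq> 0 \<and> f x * f y = f z \<and>
           x \<noteq> z \<and> y \<noteq> z \<and> f z \<noteq> 0}"
  define R where "R = (\<lambda>k. {x. x \<noteq> 0 \<and> Ar*x + Cr/x = k})"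
  have finR: "finite (R k)" for k unfolding R_def using quad_roots_finite[OF A0] by simp
  define B where "B = (\<lambda>x. (x,T,T)) ` R 1 \<union> (\<lambda>(x,z). (x,T,z)) ` (R 0 \<times> R 0)"
  have finB: "finite B" unfolding B_def using finR by simp
  have sub: "\<Phi> ` G \<subseteq> S \<union> B"
  proof
    fix q assume "q \<in> \<Phi> ` G"
    then obtain X Y where XY: "(X,Y) \<in> G" and q: "q = \<Phi> (X,Y)" by auto
    define s where "s = sf X Y"
    define r where "r = rf X Y"
    define x where "x = 2*Cr/s"
    define z where "z = (F*(s^2+D) + r)/(4*Ar*s)"
    have qq: "q = (x,T,z)" unfolding q \<Phi>_def x_def z_def s_def r_def by simp
    have pp: "s \<noteq> 0" "r^2 = F^2*s^4 + (2*D*F^2 - 4*D)*s^2 + F^2*D^2"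
      using props[OF XY] s_def r_def by auto
    from L1[OF A0 C0 pp(1) D_def pp(2) x_def z_def]
    have x0: "x \<noteq> 0" and z0: "z \<noteq> 0" and fx: "f x = (s^2+D)/(2*s)"
      and fz: "f z = F*((s^2+D)/(2*s))" by (auto simp: fdef)
    have eqn: "f x * f T = f z" using fx fz fT by simp
    show "q \<in> S \<union> B"
    proof (cases "f z = 0 \<or> z = T")
      case True
      show ?thesis
      proof (cases "f z = 0")
        case True
        hence "f x = 0" using eqn fT F0 by simp
        hence "x \<in> R 0" "z \<in> R 0" using x0 z0 True by (auto simp: R_def fdef)
        thus ?thesis unfolding qq B_def by auto
      next
        case False
        hence zT: "z = T" using \<open>f z = 0 \<or> z = T\<close> by simp
        hence "f x = 1" using eqn fT F0 by simp
        hence "x \<in> R 1" using x0 by (auto simp: R_def fdef)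
        thus ?thesis unfolding qq B_def zT by auto
      qed
    next
      case False
      have "x \<noteq> z"
      proof
        assume "x = z"
        hence "f x * F = f x" using eqn fT by simp
        hence "f x * (F - 1) = 0" by (simp add: algebra_simps)
        moreover have "f x \<noteq> 0" using \<open>x = z\<close> False by simp
        moreover have "F \<noteq> 1"
        proof
          assume "F = 1" hence "e3 = e1" using E1 E3 by simp
          thus False using assms(8) by simp
        qed
        ultimately show False by simp
      qed
      thus ?thesis unfolding qq S_def using x0 z0 T0 eqn False by auto
    qed
  qed
  show ?thesis
  proof
    assume "finite {(x::rat, y::rat, z::rat).
           x \<noteq> 0 \<and> y \<noteq> 0 \<and> z \<noteq> 0 \<and> f x * f y = f z \<and>
           x \<noteq> z \<and> y \<noteq> z \<and> f z \<noteq> 0}"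
    hence "finite (S \<union> B)" using finB S_def by simp
    thus False using sub infI finite_subset by blast
  qed
qed

end
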